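(* Let $(\mathbf{J}_1^t,\mathbf{J}_2^t)$ be a canonical family of generalized Kähler structures driven by real 2-forms $K_t$, and let $(g_t,b_t,I_t,J_t)$ be the corresponding one-parameter family of bihermitian data. Then, writing $K=K_t$ and dots for $\partial_t$, $$\dot g=-\tfrac12[K,I],\quad \dot b=-\tfrac12\{K,I\},\quad \dot\omega_I=-\tfrac12[K,I]I,\quad \dot\omega_J=-\tfrac12\{K,IJ\},\quad \dot I=0,\quad \dot J=\tfrac12[I,J]g^{-1}K.$$
   Context: Bihermitian data $(g,b,I,J)$ correspond to $(\mathbf{J}_1,\mathbf{J}_2)$ via the Gualtieri map $\mathbf{J}_{1/2}=\tfrac12 e^b\begin{pmatrix} I\pm J & -(\omega_I^{-1}\mp\omega_J^{-1})\\ \omega_I\mp\omega_J & -(I^*\pm J^* )\end{pmatrix}e^{-b}$, with $\omega_I=gI$, $\omega_J=gJ$ viewed as maps $T\to T^*$ and $I^*,J^*$ the dual endomorphisms of $T^*$. A generalized Kähler structure is a pair of commuting integrable generalized complex structures with $\langle-\mathbf{J}_1\mathbf{J}_2\cdot,\cdot\rangle>0$. For a 2-form $K$, $e^K(X+\xi)=X+\xi+K(X,\cdot)$ and $\Phi_K(\mathbf{J})=[\mathbf{J},e^K\mathbf{J}]$; a canonical family is a one-parameter family of generalized Kähler structures with $\partial_t\mathbf{J}_i^t=\Phi_{K_t}(\mathbf{J}_i^t)$ for $i=1,2$. All expressions are compositions of maps: 2-forms are maps $T\to T^*$, $g^{-1}:T^*\to T$, and for a 2-form $K$ and endomorphism $A$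 of $T$, $[K,A]=KA-A^*K$ and $\{K,A\}=KA+A^*K$. *)

theory Defs
  imports "HOL-Analysis.Analysis"
begin

text \<open>Pointwise (linear-algebraic) model.  The tangent space T at a point is
  real^'n; a covector is also represented by a vector in real^'n via
  xi(X) = xi \<bullet> X.  Hence a linear map T \<to> T, T* \<to> T, T \<to> T* or T* \<to> T*
  is a matrix real^'n^'n, the dual endomorphism A* of A is transpose A, and a
  2-form K is represented by the map X \<mapsto> K(X, -), i.e. a matrix with
  transpose K = - K.  The generalized tangent space T \<oplus> T* is
  real^('n + 'n): Inl-indices are the T-component, Inr-indices the T*-component.\<close>

type_synonym 'n sqmat = "real^'n^'n"
type_synonym 'n gmat = "real^('n + 'n)^('n + 'n)"

definition gblock :: "'n::finite sqmat \<Rightarrow> 'n sqmat \<Rightarrow> 'n sqmat \<Rightarrow> 'n sqmat \<Rightarrow> 'n gmat" where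
  "gblock A B C D = (\<chi> i j. case i of
      Inl a \<Rightarrow> (case j of Inl c \<Rightarrow> A $ a $ c | Inr c \<Rightarrow> B $ a $ c)
    | Inr a \<Rightarrow> (case j of Inl c \<Rightarrow> C $ a $ c | Inr c \<Rightarrow> D $ a $ c))"

text \<open>B-field transform e^K (X + xi) = X + xi + K(X, -).\<close>
definition bexp :: "'n::finite sqmat \<Rightarrow> 'n gmat" where
  "bexp K = gblock (mat 1) 0 K (mat 1)"

definition gualtieri :: "real \<Rightarrow> 'n::finite sqmat \<Rightarrow> 'n sqmat \<Rightarrow> 'n sqmat \<Rightarrow> 'n sqmat \<Rightarrow> 'n gmat" where
  "gualtieri s g b I J =
     (1/2) *\<^sub>R (bexp b **
        gblock (I + s *\<^sub>R J)
               (- (matrix_inv (g ** I) - s *\<^sub>R matrix_inv (g ** J)))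
               (g ** I - s *\<^sub>R (g ** J))
               (- (transpose I + s *\<^sub>R transpose J))
        ** bexp (- b))"

definition J1_of :: "'n::finite sqmat \<Rightarrow> 'n sqmat \<Rightarrow> 'n sqmat \<Rightarrow> 'n sqmat \<Rightarrow> 'n gmat" where
  "J1_of g b I J = gualtieri 1 g b I J"

definition J2_of :: "'n::finite sqmat \<Rightarrow> 'n sqmat \<Rightarrow> 'n sqmat \<Rightarrow> 'n sqmat \<Rightarrow> 'n gmat" where
  "J2_of g b I J = gualtieri (-1) g b I J"

definition PhiK :: "'n::finite sqmat \<Rightarrow> 'n gmat \<Rightarrow> 'n gmat" where
  "PhiK K JJ = JJ ** (bexp K ** JJ) - (bexp K ** JJ) ** JJ"

definition formbr :: "'n::finite sqmat \<Rightarrow> 'n sqmat \<Rightarrow> 'n sqmat" where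
  "formbr K A = K ** A - transpose A ** K"

definition formac :: "'n::finite sqmat \<Rightarrow> 'n sqmat \<Rightarrow> 'n sqmat" where
  "formac K A = K ** A + transpose A ** K"

definition endo_comm :: "'n::finite sqmat \<Rightarrow> 'n sqmat \<Rightarrow> 'n sqmat" where
  "endo_comm A B = A ** B - B ** A"

definition is_2form :: "'n::finite sqmat \<Rightarrow> bool" where
  "is_2form K \<longleftrightarrow> transpose K = - K"

definition bihermitian :: "'n::finite sqmat \<Rightarrow> 'n sqmat \<Rightarrow> 'n sqmat \<Rightarrow> 'n sqmat \<Rightarrow> bool" where
  "bihermitian g b I J \<longleftrightarrow>
     transpose g = g \<and> (\<forall>x. x \<noteq> 0 \<longrightarrow> x \<bullet> (g *v x) > 0) \<and>
     is_2form b \<and>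
     I ** I = - mat 1 \<and> J ** J = - mat 1 \<and>
     transpose I ** g ** I = g \<and> transpose J ** g ** J = g"

end

theory Submission
  imports Defs
begin



lemma mm_zero_left[simp]: "(0::real^'n::finite^'n) ** A = 0"
  by (simp add: matrix_matrix_mult_def vec_eq_iff)
lemma mm_zero_right[simp]: "(A::real^'n::finite^'n) ** 0 = 0"
  by (simp add: matrix_matrix_mult_def vec_eq_iff)
lemma mm_scale_left: "(c *\<^sub>R A) ** (B::real^'n::finite^'n) = c *\<^sub>R (A ** B)"
  by (simp add: scalar_matrix_assoc)
lemma mm_scale_right: "(A::real^'n::finite^'n) ** (c *\<^sub>R B) = c *\<^sub>R (A ** B)"
  by (simp add: matrix_scalar_ac scalar_matrix_assoc)
lemma mm_minus_left: "(- A) ** (B::real^'n::finite^'n) = - (A ** B)"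
  by (simp add: matrix_matrix_mult_def vec_eq_iff sum_negf)
lemma mm_minus_right: "(A::real^'n::finite^'n) ** (- B) = - (A ** B)"
  by (simp add: matrix_matrix_mult_def vec_eq_iff sum_negf)
lemma mm_add_left: "(A + C) ** (B::real^'n::finite^'n) = A ** B + C ** B"
  by (simp add: matrix_matrix_mult_def vec_eq_iff sum.distrib algebra_simps)
lemma mm_diff_left: "(A - C) ** (B::real^'n::finite^'n) = A ** B - C ** B"
  by (simp add: matrix_matrix_mult_def vec_eq_iff sum_subtractf algebra_simps)
lemma mm_diff_right: "(A::real^'n::finite^'n) ** (B - C) = A ** B - A ** C"
  by (simp add: matrix_matrix_mult_def vec_eq_iff sum_subtractf algebra_simps)

lemma transpose_add: "transpose (A + B) = transpose A + transpose (B::real^'n::finite^'n)"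
  by (simp add: transpose_def vec_eq_iff)
lemma transpose_minus: "transpose (- A) = - transpose (A::real^'n::finite^'n)"
  by (simp add: transpose_def vec_eq_iff)
lemma transpose_diff: "transpose (A - B) = transpose A - transpose (B::real^'n::finite^'n)"
  by (simp add: transpose_def vec_eq_iff)

lemma bilinear_mm: "bounded_bilinear ((**) :: real^'n::finite^'n \<Rightarrow> real^'n^'n \<Rightarrow> real^'n^'n)"
proof -
  have "bilinear ((**) :: real^'n::finite^'n \<Rightarrow> real^'n^'n \<Rightarrow> real^'n^'n)"
    unfolding bilinear_def
    by (auto intro!: linearI simp: matrix_add_ldistrib mm_add_left mm_scale_left mm_scale_right)
  then show ?thesis by (simp add: bilinear_conv_bounded_bilinear)
qed

lemma bl_transpose: "bounded_linear (transpose :: real^'n::finite^'n \<Rightarrow> _)"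
proof -
  have "linear (transpose :: real^'n::finite^'n \<Rightarrow> _)"
    by (auto intro!: linearI simp: transpose_add transpose_scalar)
  then show ?thesis by (simp add: linear_conv_bounded_linear)
qed

definition blk11 :: "'n::finite gmat \<Rightarrow> 'n sqmat" where "blk11 M = (\<chi> a c. M $ Inl a $ Inl c)"
definition blk12 :: "'n::finite gmat \<Rightarrow> 'n sqmat" where "blk12 M = (\<chi> a c. M $ Inl a $ Inr c)"
definition blk21 :: "'n::finite gmat \<Rightarrow> 'n sqmat" where "blk21 M = (\<chi> a c. M $ Inr a $ Inl c)"
definition blk22 :: "'n::finite gmat \<Rightarrow> 'n sqmat" where "blk22 M = (\<chi> a c. M $ Inr a $ Inr c)"

lemmas blk_defs = blk11_def blk12_def blk21_def blk22_def

lemma bl_blk11: "bounded_linear (blk11 :: 'n::finite gmat \<Rightarrow> _)"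
  and bl_blk12: "bounded_linear (blk12 :: 'n::finite gmat \<Rightarrow> _)"
  by (auto intro!: linearI simp: linear_conv_bounded_linear[symmetric] blk_defs vec_eq_iff)

lemma blk_gblock[simp]:
  "blk11 (gblock A B C D) = A" "blk12 (gblock A B C D) = B"
  "blk21 (gblock A B C D) = C" "blk22 (gblock A B C D) = D"
  by (simp_all add: blk_defs gblock_def vec_eq_iff)

lemma blk_lin[simp]:
  "blk11 (X + Y) = blk11 X + blk11 Y" "blk12 (X + Y) = blk12 X + blk12 Y"
  "blk11 (X - Y) = blk11 X - blk11 Y" "blk12 (X - Y) = blk12 X - blk12 Y"
  "blk11 (c *\<^sub>R X) = c *\<^sub>R blk11 X" "blk12 (c *\<^sub>R X) = c *\<^sub>R blk12 X"
  "blk21 (X + Y) = blk21 X + blk21 Y" "blk22 (X + Y) = blk22 X + blk22 Y"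
  "blk21 (X - Y) = blk21 X - blk21 Y" "blk22 (X - Y) = blk22 X - blk22 Y"
  by (simp_all add: blk_defs vec_eq_iff)

lemma sum_UNIV_Plus: "(\<Sum>k\<in>(UNIV::('a::finite + 'b::finite) set). f k) = (\<Sum>k\<in>UNIV. f (Inl k)) + (\<Sum>k\<in>UNIV. f (Inr k))"
  by (subst UNIV_Plus_UNIV[symmetric], subst sum.Plus) auto

lemma blk_mult:
  fixes X Y :: "'n::finite gmat"
  shows "blk11 (X ** Y) = blk11 X ** blk11 Y + blk12 X ** blk21 Y"
    "blk12 (X ** Y) = blk11 X ** blk12 Y + blk12 X ** blk22 Y"
    "blk21 (X ** Y) = blk21 X ** blk11 Y + blk22 X ** blk21 Y"
    "blk22 (X ** Y) = blk21 X ** blk12 Y + blk22 X ** blk22 Y"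
  by (simp_all add: blk_defs vec_eq_iff matrix_matrix_mult_def sum_UNIV_Plus)

lemma blk_bexp[simp]: "blk11 (bexp K) = mat 1" "blk12 (bexp K) = 0" "blk21 (bexp K) = K" "blk22 (bexp K) = mat 1"
  by (simp_all add: bexp_def)

lemma blk_PhiK:
  "blk12 (PhiK K M) = blk12 M ** K ** blk12 M"
  "blk11 (PhiK K M) = blk12 M ** K ** blk11 M"
  by (simp_all add: PhiK_def blk_mult matrix_add_ldistrib mm_add_left matrix_mul_assoc)

lemma blk_gualtieri:
  "blk12 (gualtieri s g b I J) = (1/2) *\<^sub>R (- (matrix_inv (g ** I) - s *\<^sub>R matrix_inv (g ** J)))"
  "blk11 (gualtieri s g b I J) = (1/2) *\<^sub>R ((I + s *\<^sub>R J) + (matrix_inv (g ** I) - s *\<^sub>R matrix_inv (g ** J)) ** b)"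
  by (simp_all add: gualtieri_def blk_mult mm_minus_right mm_minus_left mm_diff_left mm_scale_left)




typedef (overloaded) ('n::finite) mx = "UNIV :: (real^'n^'n) set" morphisms rep W by simp

setup_lifting type_definition_mx

instantiation mx :: (finite) real_algebra_1
begin
lift_definition zero_mx :: "'n::finite mx" is "0 :: real^'n::finite^'n" .
lift_definition one_mx :: "'n::finite mx" is "mat 1 :: real^'n::finite^'n" .
lift_definition plus_mx :: "'n::finite mx \<Rightarrow> 'n::finite mx \<Rightarrow> 'n::finite mx" is "(+) :: real^'n::finite^'n \<Rightarrow> _" .
lift_definition minus_mx :: "'n::finite mx \<Rightarrow> 'n::finite mx \<Rightarrow> 'n::finite mx" is "(-) :: real^'n::finite^'n \<Rightarrow> _" .
lift_definition uminus_mx :: "'n::finite mx \<Rightarrow> 'n::finite mx" is "uminus :: real^'n::finite^'n \<Rightarrow> _" .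
lift_definition times_mx :: "'n::finite mx \<Rightarrow> 'n::finite mx \<Rightarrow> 'n::finite mx" is "(**) :: real^'n::finite^'n \<Rightarrow> real^'n::finite^'n \<Rightarrow> real^'n::finite^'n" .
lift_definition scaleR_mx :: "real \<Rightarrow> 'n::finite mx \<Rightarrow> 'n::finite mx" is "(*\<^sub>R) :: real \<Rightarrow> real^'n::finite^'n \<Rightarrow> _" .
instance
proof
  fix a b c :: "'n::finite mx" and r s :: real
  show "a + b + c = a + (b + c)" by transfer (simp add: add.assoc)
  show "a + b = b + a" by transfer (simp add: add.commute)
  show "0 + a = a" by transfer simp
  show "- a + a = 0" by transfer simp
  show "a - b = a + - b" by transfer simp
  show "r *\<^sub>R (a + b) = r *\<^sub>R a + r *\<^sub>R b" by transfer (simp add: scaleR_right_distrib)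
  show "(r + s) *\<^sub>R a = r *\<^sub>R a + s *\<^sub>R a" by transfer (simp add: scaleR_left_distrib)
  show "r *\<^sub>R s *\<^sub>R a = (r * s) *\<^sub>R a" by transfer simp
  show "1 *\<^sub>R a = a" by transfer simp
  show "a * b * c = a * (b * c)" by transfer (simp add: matrix_mul_assoc)
  show "1 * a = a" by transfer simp
  show "a * 1 = a" by transfer simp
  show "(a + b) * c = a * c + b * c" by transfer (simp add: mm_add_left)
  show "a * (b + c) = a * b + a * c" by transfer (simp add: matrix_add_ldistrib)
  show "r *\<^sub>R a * b = r *\<^sub>R (a * b)" by transfer (simp add: mm_scale_left)
  show "a * r *\<^sub>R b = r *\<^sub>R (a * b)" by transfer (simp add: mm_scale_right)
  show "(0::'n::finite mx) \<noteq> 1"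
  proof transfer
    obtain i :: 'n where True by simp
    have "(mat 1 :: real^'n::finite^'n) $ i $ i = 1" by (simp add: mat_def)
    then show "(0::real^'n::finite^'n) \<noteq> mat 1" by (metis vec_lambda_beta zero_index zero_neq_one)
  qed
qed
end

lemma W_hom:
  "W (A ** B) = W A * W B" "W (A + B) = W A + W B" "W (A - B) = W A - W B"
  "W (- A) = - W A" "W (c *\<^sub>R A) = c *\<^sub>R W A" "W (mat 1) = 1" "W 0 = 0"
  by (simp_all only: times_mx.abs_eq plus_mx.abs_eq minus_mx.abs_eq uminus_mx.abs_eq scaleR_mx.abs_eq
      one_mx.abs_eq zero_mx.abs_eq eq_onp_same_args)

lemma W_inj: "W A = W B \<longleftrightarrow> A = B"
  by (simp add: W_inject)

definition tpm :: "'n::finite mx \<Rightarrow> 'n mx" where "tpm A = W (transpose (rep A))"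

lemma tpm_W: "tpm (W A) = W (transpose A)" by (simp add: tpm_def W_inverse)

lemma tpm_props:
  "tpm (u * v) = tpm v * tpm u" "tpm (u + v) = tpm u + tpm v" "tpm (- u) = - tpm u"
  "tpm (c *\<^sub>R u) = c *\<^sub>R tpm u"
  by (simp_all add: tpm_def times_mx.rep_eq plus_mx.rep_eq uminus_mx.rep_eq scaleR_mx.rep_eq matrix_transpose_mul
       transpose_add transpose_minus transpose_scalar W_hom)




lemma inv_facts:
  fixes A X :: "real^'n::finite^'n"
  assumes "A ** X = mat 1"
  shows "matrix_inv A = X" "A ** matrix_inv A = mat 1" "matrix_inv A ** A = mat 1"
proof -
  have XA: "X ** A = mat 1" using assms matrix_left_right_inverse by blast
  have ex: "\<exists>A'. A ** A' = mat 1 \<and> A' ** A = mat 1" using assms XA by blast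
  have m: "A ** matrix_inv A = mat 1 \<and> matrix_inv A ** A = mat 1"
    unfolding matrix_inv_def by (rule someI_ex[OF ex])
  then show "A ** matrix_inv A = mat 1" "matrix_inv A ** A = mat 1" by auto
  have "matrix_inv A = matrix_inv A ** (A ** X)" using assms by simp
  also have "\<dots> = X" using m by (simp add: matrix_mul_assoc)
  finally show "matrix_inv A = X" .
qed

lemma posdef_inv:
  fixes g :: "real^'n::finite^'n"
  assumes "\<forall>x. x \<noteq> 0 \<longrightarrow> x \<bullet> (g *v x) > 0"
  shows "g ** matrix_inv g = mat 1" "matrix_inv g ** g = mat 1"
proof -
  have "\<forall>x. g *v x = 0 \<longrightarrow> x = 0" using assms by force
  then obtain B where "B ** g = mat 1" using matrix_left_invertible_ker by blast
  then have "g ** B = mat 1" using matrix_left_right_inverse by blast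
  then show "g ** matrix_inv g = mat 1" "matrix_inv g ** g = mat 1" using inv_facts by blast+
qed

lemma W_eqI: "W A = W B \<Longrightarrow> A = B" by (simp add: W_inj)

lemma bih_facts:
  fixes g b I J :: "real^'n::finite^'n"
  assumes "bihermitian g b I J"
  shows "g ** matrix_inv g = mat 1" "matrix_inv g ** g = mat 1"
    "matrix_inv (g ** I) = - (I ** matrix_inv g)" "matrix_inv (g ** J) = - (J ** matrix_inv g)"
    "(g ** I) ** matrix_inv (g ** I) = mat 1" "(g ** J) ** matrix_inv (g ** J) = mat 1"
    "transpose I = - (g ** I ** matrix_inv g)" "transpose J = - (g ** J ** matrix_inv g)"
    "transpose (matrix_inv g) = matrix_inv g" "transpose g = g" "transpose b = - b"
    "I ** I = - mat 1" "J ** J = - mat 1"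
proof -
  note B = assms[unfolded bihermitian_def is_2form_def]
  have gh: "g ** matrix_inv g = mat 1" and hg: "matrix_inv g ** g = mat 1" using posdef_inv B by blast+
  then show "g ** matrix_inv g = mat 1" "matrix_inv g ** g = mat 1" by auto
  define h where "h = matrix_inv g"
  have Wgh: "W g * W h = 1" "W h * W g = 1" using gh hg unfolding h_def by (metis W_hom)+
  have WII: "W I * W I = -1" "W J * W J = -1" using B by (metis W_hom)+
  have WtI: "W (transpose I) * W g * W I = W g" "W (transpose J) * W g * W J = W g" using B by (metis W_hom)+
  have "(g ** I) ** (- (I ** h)) = mat 1"
    by (rule W_eqI) (simp add: W_hom mult.assoc flip: mult.assoc[of "W I" "W I"] add: WII Wgh)
  then show "matrix_inv (g ** I) = - (I ** matrix_inv g)" "(g ** I) ** matrix_inv (g ** I) = mat 1"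
    using inv_facts unfolding h_def by blast+
  have "(g ** J) ** (- (J ** h)) = mat 1"
    by (rule W_eqI) (simp add: W_hom mult.assoc flip: mult.assoc[of "W J" "W J"] add: WII Wgh)
  then show "matrix_inv (g ** J) = - (J ** matrix_inv g)" "(g ** J) ** matrix_inv (g ** J) = mat 1"
    using inv_facts unfolding h_def by blast+
  have "W (transpose I) = W (transpose I) * (W g * W I) * (- W I * W h)"
    by (simp add: mult.assoc flip: mult.assoc[of "W I" "W I"] add: WII Wgh)
  also have "\<dots> = - (W g * W I * W h)" using WtI by (simp add: mult.assoc)
  finally show "transpose I = - (g ** I ** matrix_inv g)"
    by (intro W_eqI) (simp add: W_hom h_def)
  have "W (transpose J) = W (transpose J) * (W g * W J) * (- W J * W h)"
    by (simp add: mult.assoc flip: mult.assoc[of "W J" "W J"] add: WII Wgh)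
  also have "\<dots> = - (W g * W J * W h)" using WtI by (simp add: mult.assoc)
  finally show "transpose J = - (g ** J ** matrix_inv g)"
    by (intro W_eqI) (simp add: W_hom h_def)
  have "transpose h ** g = mat 1"
    using B gh unfolding h_def by (metis matrix_transpose_mul transpose_mat)
  then have "transpose h = h ** (g ** transpose h)"
    by (metis hg h_def matrix_mul_lid matrix_mul_assoc matrix_left_right_inverse)
  then show "transpose (matrix_inv g) = matrix_inv g"
    using \<open>transpose h ** g = mat 1\<close> matrix_left_right_inverse unfolding h_def by (metis matrix_mul_rid)
  show "transpose g = g" "transpose b = - b" "I ** I = - mat 1" "J ** J = - mat 1" using B by auto
qed




lemma half_cancel:
  fixes Y Z :: "'a::real_vector"
  assumes "Y + Y = Z + Z" shows "Y = Z"
proof -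
  have "(2::real) *\<^sub>R Y = 2 *\<^sub>R Z" using assms by (simp add: scaleR_2)
  then show ?thesis by simp
qed

lemma core:
  fixes g h I J k x G P Q b :: "'a::real_algebra_1"
  and tp :: "'a \<Rightarrow> 'a"
  assumes gh: "g*h = 1" and hg: "h*g = 1" and II: "I*I = -1" and JJ: "J*J = -1"
  and tp_mult: "\<And>p q. tp (p*q) = tp q * tp p"
  and tp_add: "\<And>p q. tp (p+q) = tp p + tp q"
  and tp_uminus: "\<And>u. tp (-u) = - tp u"
  and tpg: "tp g = g" and tph: "tp h = h" and tpk: "tp k = -k" and tpx: "tp x = -x"
  and tpI: "tp I = -(g*I*h)" and tpJ: "tp J = -(g*J*h)" and tpG: "tp G = G"
  and H1: "(G*I + g*P)*(-(I*h)) + g*I*(-((I - J)*h*k*((I - J)*h) + (I + J)*h*k*((I + J)*h))) = 0"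
  and H2: "(G*J + g*Q)*(-(J*h)) + g*J*(-((I + J)*h*k*((I + J)*h) - (I - J)*h*k*((I - J)*h))) = 0"
  and H3: "(I - J)*h*k*(I + J - (I - J)*h*b) + (I + J)*h*k*(I - J - (I + J)*h*b)
      = P + (-((I - J)*h*k*((I - J)*h) + (I + J)*h*k*((I + J)*h)))*b + (-(I*h))*x"
  and H4: "(I - J)*h*k*(I + J - (I - J)*h*b) - (I + J)*h*k*(I - J - (I + J)*h*b)
      = Q - (-((I + J)*h*k*((I + J)*h) - (I - J)*h*k*((I - J)*h)))*b - (-(J*h))*x"
  and H5: "P*I + I*P = 0"
  shows "G = -2*(k*I + g*I*h*k) \<and> x = -2*(k*I - g*I*h*k) \<and> P = 0
    \<and> Q = 2*((I*J - J*I)*h*k) \<and> G*J + g*Q = -2*(k*I*J + g*J*I*h*k)"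
proof -
  have gh': "\<And>z. g*(h*z) = z" using gh by (metis mult.assoc mult_1_left)
  have hg': "\<And>z. h*(g*z) = z" using hg by (metis mult.assoc mult_1_left)
  have II': "\<And>z. I*(I*z) = -z" using II by (metis mult.assoc mult_1_left mult_minus_left)
  have JJ': "\<And>z. J*(J*z) = -z" using JJ by (metis mult.assoc mult_1_left mult_minus_left)
  note R = gh hg II JJ gh' hg' II' JJ'
  have tp_diff: "\<And>p q. tp (p-q) = tp p - tp q" using tp_add tp_uminus
    by (metis diff_conv_add_uminus)
  have "((G*I + g*P)*(-(I*h)) + g*I*(-((I - J)*h*k*((I - J)*h) + (I + J)*h*k*((I + J)*h))))*(g*I) = 0"
    using H1 by simp
  then have s1: "G*I + g*P = 2*(k + g*I*J*h*k*J*I)" by (simp add: algebra_simps R mult_2 mult_2_right)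
  have s2: "P = 2*(I*h*k*I - J*h*k*J) + I*h*x"
    using H3 by (simp add: algebra_simps R mult_2 mult_2_right)
  have s3: "G = 2*(-(k*I) + g*I*J*h*k*J - g*I*h*k - g*J*h*k*J*I) + g*I*h*x*I"
  proof -
    have "G*I = 2*(k + g*I*J*h*k*J*I) - g*P" using s1 by (simp add: algebra_simps)
    then have "G*I*I = (2*(k + g*I*J*h*k*J*I) - g*(2*(I*h*k*I - J*h*k*J) + I*h*x))*I"
      using s2 by simp
    then show ?thesis by (simp add: algebra_simps R mult_2 mult_2_right)
  qed
  have s4: "Q = 2*(I*h*k*J - J*h*k*I) - J*h*x"
    using H4 by (simp add: algebra_simps R mult_2 mult_2_right)
  have s5: "G*J + g*Q = 2*(-(g*J*I*h*k) - k*I*J)"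
  proof -
    have "((G*J + g*Q)*(-(J*h)) + g*J*(-((I + J)*h*k*((I + J)*h) - (I - J)*h*k*((I - J)*h))))*(g*J) = 0"
      using H2 by simp
    moreover have "(G*J + g*Q) - 2*(-(g*J*I*h*k) - k*I*J) = ((G*J + g*Q)*(-(J*h)) + g*J*(-((I + J)*h*k*((I + J)*h) - (I - J)*h*k*((I - J)*h))))*(g*J)"
      by (simp add: algebra_simps R mult_2 mult_2_right)
    ultimately show ?thesis by simp
  qed
  have s6: "G = 2*(g*J*I*h*k*J - k*I - g*I*h*k - g*J*h*k*I*J) - g*J*h*x*J"
  proof -
    have "G*J = 2*(-(g*J*I*h*k) - k*I*J) - g*Q" using s5 by (simp add: algebra_simps)
    then have "G*J*J = (2*(-(g*J*I*h*k) - k*I*J) - g*(2*(I*h*k*J - J*h*k*I) - J*h*x))*J"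
      using s4 by simp
    then show ?thesis by (simp add: algebra_simps R mult_2 mult_2_right)
  qed
  have s7: "G = 2*(-(g*I*h*k) + g*J*h*k*J*I - k*I - g*I*J*h*k*J) - g*I*h*x*I"
  proof -
    have "tp G = tp (2*(-(k*I) + g*I*J*h*k*J - g*I*h*k - g*J*h*k*J*I) + g*I*h*x*I)"
      using s3 by simp
    then show ?thesis
      by (simp add: tpG tp_mult tp_add tp_uminus tp_diff mult_2 tpg tph tpk tpx tpI tpJ
          algebra_simps R mult_2_right)
  qed
  have s8: "g*I*h*x*I = 2*(g*J*h*k*J*I - g*I*J*h*k*J)"
  proof (rule half_cancel)
    show "g*I*h*x*I + g*I*h*x*I = 2*(g*J*h*k*J*I - g*I*J*h*k*J) + 2*(g*J*h*k*J*I - g*I*J*h*k*J)"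
      using s3 s7 by (simp add: algebra_simps R mult_2 mult_2_right)
  qed
  have s9: "x = 2*(g*J*h*k*J*I - g*I*J*h*k*J)"
  proof -
    have "x = g*I*h*(g*I*h*x*I)*I" by (simp add: algebra_simps R)
    also have "\<dots> = g*I*h*(2*(g*J*h*k*J*I - g*I*J*h*k*J))*I" using s8 by simp
    finally show ?thesis by (simp add: algebra_simps R mult_2 mult_2_right)
  qed
  have s10: "G = -2*(k*I + g*I*h*k)"
  proof -
    have "G = 2*(-(k*I) + g*I*J*h*k*J - g*I*h*k - g*J*h*k*J*I) + 2*(g*J*h*k*J*I - g*I*J*h*k*J)"
      using s3 s8 by simp
    then show ?thesis by (simp add: algebra_simps mult_2 mult_2_right)
  qed
  have s11: "x = 2*(g*I*h*k - k*I)"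
  proof -
    have e: "g*J*h*x*J = 2*(g*J*I*h*k*J - g*J*h*k*I*J)"
      using s6 s10 by (simp add: algebra_simps R mult_2 mult_2_right)
    have "x = g*J*h*(g*J*h*x*J)*J" by (simp add: algebra_simps R)
    also have "\<dots> = g*J*h*(2*(g*J*I*h*k*J - g*J*h*k*I*J))*J" using e by simp
    finally show ?thesis by (simp add: algebra_simps R mult_2 mult_2_right)
  qed
  define Rr where "Rr = h*k + J*h*k*J"
  have s12: "I*Rr = Rr*I"
  proof -
    have "h*(2*(g*J*h*k*J*I - g*I*J*h*k*J)) = h*(2*(g*I*h*k - k*I))" using s9 s11 by simp
    then have "I*Rr + I*Rr = Rr*I + Rr*I"
      unfolding Rr_def by (simp add: algebra_simps R mult_2 mult_2_right)
    then show ?thesis by (rule half_cancel)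
  qed
  have s13: "P = -2*Rr"
    using s2 s11 unfolding Rr_def by (simp add: algebra_simps R mult_2 mult_2_right)
  have "Rr*I + I*Rr = 0"
  proof (rule half_cancel[where Z=0, simplified])
    have e: "(-2*Rr)*I + I*(-2*Rr) = 0" using H5 s13 by simp
    have "Rr*I + I*Rr + (Rr*I + I*Rr) = - ((-2*Rr)*I + I*(-2*Rr))"
      by (simp add: algebra_simps mult_2 mult_2_right)
    then show "Rr*I + I*Rr + (Rr*I + I*Rr) = 0" using e by (metis minus_zero)
  qed
  then have "I*Rr + I*Rr = 0 + 0" using s12 by simp
  then have "I*Rr = 0" by (rule half_cancel)
  then have "I*(I*Rr) = 0" by simp
  then have Rr0: "Rr = 0" using II' by simp
  then have P0: "P = 0" using s13 by simp
  have hkJ: "h*k*J = J*h*k"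
  proof -
    have "J*Rr = 0" using Rr0 by simp
    then show ?thesis unfolding Rr_def by (simp add: algebra_simps R)
  qed
  have hkJ': "\<And>z. h*(k*(J*z)) = J*(h*(k*z))" using hkJ by (metis mult.assoc)
  have hkJ'': "h*(k*J) = J*(h*k)" using hkJ by (simp add: mult.assoc)
  have sQ: "Q = 2*((I*J - J*I)*h*k)"
    using s4 s11 by (simp add: algebra_simps R mult_2 mult_2_right hkJ' hkJ'')
  have i1: "-2*(k*I - g*I*h*k) = 2*(g*I*h*k - k*I)" by (simp add: algebra_simps mult_2 mult_2_right)
  have i2: "-2*(k*I*J + g*J*I*h*k) = 2*(-(g*J*I*h*k) - k*I*J)" by (simp add: algebra_simps mult_2 mult_2_right)
  show ?thesis using s10 s11 P0 sQ s5 i1 i2 by simp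
qed

lemma two_eqI: "(2::real) *\<^sub>R X = 2 *\<^sub>R Y \<Longrightarrow> X = (Y::'a::real_vector)" by simp

lemma vd_works: "f differentiable at t \<Longrightarrow> (f has_vector_derivative vector_derivative f (at t)) (at t)"
  using vector_derivative_works by blast

lemma const_deriv_zero:
  assumes "(f has_vector_derivative D) (at t)" "open S" "t \<in> S" "\<And>u. u \<in> S \<Longrightarrow> f u = c"
  shows "D = 0"
proof -
  have "((\<lambda>u. c) has_vector_derivative D) (at t)"
    using has_vector_derivative_transform_within_open[OF assms(1-3)] assms(4) by auto
  then show ?thesis using vector_derivative_unique_at has_vector_derivative_const by blast
qed

lemma mm_deriv:
  fixes f g :: "real \<Rightarrow> real^'n::finite^'n"
  assumes "(f has_vector_derivative f') (at t)" "(g has_vector_derivative g') (at t)"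
  shows "((\<lambda>u. f u ** g u) has_vector_derivative (f t ** g' + f' ** g t)) (at t)"
  using bounded_bilinear.has_vector_derivative[OF bilinear_mm assms] .

theorem proposition3p6:
  fixes S :: "real set"
    and g b I J K :: "real \<Rightarrow> real^'n::finite^'n"
  assumes "open S"
    and bih: "\<And>t. t \<in> S \<Longrightarrow> bihermitian (g t) (b t) (I t) (J t)"
    and Kform: "\<And>t. t \<in> S \<Longrightarrow> is_2form (K t)"
    and diff: "\<And>t. t \<in> S \<Longrightarrow>
        g differentiable at t \<and> b differentiable at t \<and>
        I differentiable at t \<and> J differentiable at t"
    and flow1: "\<And>t. t \<in> S \<Longrightarrow>
        ((\<lambda>s. J1_of (g s) (b s) (I s) (J s)) has_vector_derivative
          PhiK (K t) (J1_of (g t) (b t) (I t) (J t))) (at t)"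
    and flow2: "\<And>t. t \<in> S \<Longrightarrow>
        ((\<lambda>s. J2_of (g s) (b s) (I s) (J s)) has_vector_derivative
          PhiK (K t) (J2_of (g t) (b t) (I t) (J t))) (at t)"
    and "t \<in> S"
  shows "(g has_vector_derivative (- (1/2)) *\<^sub>R formbr (K t) (I t)) (at t)
    \<and> (b has_vector_derivative (- (1/2)) *\<^sub>R formac (K t) (I t)) (at t)
    \<and> ((\<lambda>s. g s ** I s) has_vector_derivative
          (- (1/2)) *\<^sub>R (formbr (K t) (I t) ** I t)) (at t)
    \<and> ((\<lambda>s. g s ** J s) has_vector_derivative
          (- (1/2)) *\<^sub>R formac (K t) (I t ** J t)) (at t)
    \<and> (I has_vector_derivative 0) (at t)
    \<and> (J has_vector_derivative
          (1/2) *\<^sub>R (endo_comm (I t) (J t) ** matrix_inv (g t) ** K t)) (at t)"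
proof -
  note tS = \<open>t \<in> S\<close>
  define G where "G = vector_derivative g (at t)"
  define x where "x = vector_derivative b (at t)"
  define P where "P = vector_derivative I (at t)"
  define Q where "Q = vector_derivative J (at t)"
  have dg: "(g has_vector_derivative G) (at t)" unfolding G_def using diff[OF tS] vd_works by blast
  have db: "(b has_vector_derivative x) (at t)" unfolding x_def using diff[OF tS] vd_works by blast
  have dI: "(I has_vector_derivative P) (at t)" unfolding P_def using diff[OF tS] vd_works by blast
  have dJ: "(J has_vector_derivative Q) (at t)" unfolding Q_def using diff[OF tS] vd_works by blast
  define A where "A = (\<lambda>u. matrix_inv (g u ** I u))"
  define B where "B = (\<lambda>u. matrix_inv (g u ** J u))"
  define F1 where "F1 = PhiK (K t) (J1_of (g t) (b t) (I t) (J t))"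
  define F2 where "F2 = PhiK (K t) (J2_of (g t) (b t) (I t) (J t))"
  have f1: "((\<lambda>s. J1_of (g s) (b s) (I s) (J s)) has_vector_derivative F1) (at t)"
    unfolding F1_def using flow1[OF tS] .
  have f2: "((\<lambda>s. J2_of (g s) (b s) (I s) (J s)) has_vector_derivative F2) (at t)"
    unfolding F2_def using flow2[OF tS] .
  have b12_1: "\<And>u. blk12 (J1_of (g u) (b u) (I u) (J u)) = (1/2) *\<^sub>R (- (A u - B u))"
    by (simp add: J1_of_def blk_gualtieri A_def B_def)
  have b12_2: "\<And>u. blk12 (J2_of (g u) (b u) (I u) (J u)) = (1/2) *\<^sub>R (- (A u + B u))"
    by (simp add: J2_of_def blk_gualtieri A_def B_def)
  have b11_1: "\<And>u. blk11 (J1_of (g u) (b u) (I u) (J u)) = (1/2) *\<^sub>R ((I u + J u) + (A u - B u) ** b u)"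
    by (simp add: J1_of_def blk_gualtieri A_def B_def)
  have b11_2: "\<And>u. blk11 (J2_of (g u) (b u) (I u) (J u)) = (1/2) *\<^sub>R ((I u - J u) + (A u + B u) ** b u)"
    by (simp add: J2_of_def blk_gualtieri A_def B_def mm_diff_left)
  have d12_1: "((\<lambda>u. (1/2) *\<^sub>R (- (A u - B u))) has_vector_derivative blk12 F1) (at t)"
    using bounded_linear.has_vector_derivative[OF bl_blk12 f1] by (simp add: b12_1)
  have d12_2: "((\<lambda>u. (1/2) *\<^sub>R (- (A u + B u))) has_vector_derivative blk12 F2) (at t)"
    using bounded_linear.has_vector_derivative[OF bl_blk12 f2] by (simp add: b12_2)
  have d11_1: "((\<lambda>u. (1/2) *\<^sub>R ((I u + J u) + (A u - B u) ** b u)) has_vector_derivative blk11 F1) (at t)"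
    using bounded_linear.has_vector_derivative[OF bl_blk11 f1] by (simp add: b11_1)
  have d11_2: "((\<lambda>u. (1/2) *\<^sub>R ((I u - J u) + (A u + B u) ** b u)) has_vector_derivative blk11 F2) (at t)"
    using bounded_linear.has_vector_derivative[OF bl_blk11 f2] by (simp add: b11_2)
  define Ap where "Ap = - (blk12 F1 + blk12 F2)"
  define Bp where "Bp = blk12 F1 - blk12 F2"
  have dA: "(A has_vector_derivative Ap) (at t)"
  proof -
    have "((\<lambda>u. - ((1/2) *\<^sub>R (- (A u - B u)) + (1/2) *\<^sub>R (- (A u + B u)))) has_vector_derivative Ap) (at t)"
      unfolding Ap_def by (intro has_vector_derivative_minus has_vector_derivative_add d12_1 d12_2)
    moreover have "(\<lambda>u. - ((1/2) *\<^sub>R (- (A u - B u)) + (1/2) *\<^sub>R (- (A u + B u)))) = A"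
      by (rule ext, rule W_eqI, rule two_eqI) (simp only: W_hom, simp add: scaleR_add_right scaleR_diff_right scaleR_2 algebra_simps)
    ultimately show ?thesis by simp
  qed
  have dB: "(B has_vector_derivative Bp) (at t)"
  proof -
    have "((\<lambda>u. (1/2) *\<^sub>R (- (A u - B u)) - (1/2) *\<^sub>R (- (A u + B u))) has_vector_derivative Bp) (at t)"
      unfolding Bp_def by (intro has_vector_derivative_diff d12_1 d12_2)
    moreover have "(\<lambda>u. (1/2) *\<^sub>R (- (A u - B u)) - (1/2) *\<^sub>R (- (A u + B u))) = B"
      by (rule ext, rule W_eqI, rule two_eqI) (simp only: W_hom, simp add: scaleR_add_right scaleR_diff_right scaleR_2 algebra_simps)
    ultimately show ?thesis by simp
  qed
  have dU: "P + (A t ** x + Ap ** b t) = blk11 F1 + blk11 F2"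
  proof -
    have "((\<lambda>u. (1/2) *\<^sub>R ((I u + J u) + (A u - B u) ** b u) + (1/2) *\<^sub>R ((I u - J u) + (A u + B u) ** b u)) has_vector_derivative blk11 F1 + blk11 F2) (at t)"
      by (intro has_vector_derivative_add d11_1 d11_2)
    moreover have "(\<lambda>u. (1/2) *\<^sub>R ((I u + J u) + (A u - B u) ** b u) + (1/2) *\<^sub>R ((I u - J u) + (A u + B u) ** b u)) = (\<lambda>u. I u + A u ** b u)"
      by (rule ext, rule W_eqI, rule two_eqI) (simp only: W_hom, simp add: scaleR_add_right scaleR_diff_right scaleR_2 algebra_simps)
    moreover have "((\<lambda>u. I u + A u ** b u) has_vector_derivative P + (A t ** x + Ap ** b t)) (at t)"
      by (rule has_vector_derivative_add[OF dI mm_deriv[OF dA db]])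
    ultimately show ?thesis using vector_derivative_unique_at by simp
  qed
  have dV: "Q - (B t ** x + Bp ** b t) = blk11 F1 - blk11 F2"
  proof -
    have "((\<lambda>u. (1/2) *\<^sub>R ((I u + J u) + (A u - B u) ** b u) - (1/2) *\<^sub>R ((I u - J u) + (A u + B u) ** b u)) has_vector_derivative blk11 F1 - blk11 F2) (at t)"
      by (intro has_vector_derivative_diff d11_1 d11_2)
    moreover have "(\<lambda>u. (1/2) *\<^sub>R ((I u + J u) + (A u - B u) ** b u) - (1/2) *\<^sub>R ((I u - J u) + (A u + B u) ** b u)) = (\<lambda>u. J u - B u ** b u)"
      by (rule ext, rule W_eqI, rule two_eqI) (simp only: W_hom, simp add: scaleR_add_right scaleR_diff_right scaleR_2 algebra_simps)
    moreover have "((\<lambda>u. J u - B u ** b u) has_vector_derivative Q - (B t ** x + Bp ** b t)) (at t)"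
      by (rule has_vector_derivative_diff[OF dJ mm_deriv[OF dB db]])
    ultimately show ?thesis using vector_derivative_unique_at by simp
  qed
  have dgI: "((\<lambda>u. g u ** I u) has_vector_derivative g t ** P + G ** I t) (at t)"
    by (rule mm_deriv[OF dg dI])
  have dgJ: "((\<lambda>u. g u ** J u) has_vector_derivative g t ** Q + G ** J t) (at t)"
    by (rule mm_deriv[OF dg dJ])
  have dGA: "(g t ** I t) ** Ap + (g t ** P + G ** I t) ** A t = 0"
  proof (rule const_deriv_zero[OF mm_deriv[OF dgI dA] \<open>open S\<close> tS])
    fix u assume "u \<in> S" then show "(g u ** I u) ** A u = mat 1" using bih_facts[OF bih] A_def by auto
  qed
  have dGB: "(g t ** J t) ** Bp + (g t ** Q + G ** J t) ** B t = 0"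
  proof (rule const_deriv_zero[OF mm_deriv[OF dgJ dB] \<open>open S\<close> tS])
    fix u assume "u \<in> S" then show "(g u ** J u) ** B u = mat 1" using bih_facts[OF bih] B_def by auto
  qed
  have dII: "I t ** P + P ** I t = 0"
  proof (rule const_deriv_zero[OF mm_deriv[OF dI dI] \<open>open S\<close> tS])
    fix u assume "u \<in> S" then show "I u ** I u = - mat 1" using bih_facts[OF bih] by auto
  qed
  have dgT: "transpose G = G"
  proof -
    have "(g has_vector_derivative transpose G) (at t)"
      by (rule has_vector_derivative_transform_within_open[OF
            bounded_linear.has_vector_derivative[OF bl_transpose dg] \<open>open S\<close> tS])
         (simp add: bih_facts(10)[OF bih])
    then show ?thesis using dg vector_derivative_unique_at by blast
  qed
  have dbT: "transpose x = - x"
  proof -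
    have "(b has_vector_derivative - transpose x) (at t)"
      by (rule has_vector_derivative_transform_within_open[OF
            has_vector_derivative_minus[OF bounded_linear.has_vector_derivative[OF bl_transpose db]] \<open>open S\<close> tS])
         (simp add: bih_facts(11)[OF bih])
    then have "- transpose x = x" using db vector_derivative_unique_at by blast
    then show ?thesis by (metis minus_minus)
  qed
  note BF = bih_facts[OF bih[OF tS]]
  have Kt: "transpose (K t) = - K t" using Kform[OF tS] by (simp add: is_2form_def)
  define h0 where "h0 = matrix_inv (g t)"
  define gg where "gg = W (g t)"
  define hh where "hh = W h0"
  define II where "II = W (I t)"
  define JJ where "JJ = W (J t)"
  define kk where "kk = W (K t)"
  define k where "k = (1/4) *\<^sub>R kk"
  define bb where "bb = W (b t)"
  define xx where "xx = W x"
  define GG where "GG = W G"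
  define PP where "PP = W P"
  define QQ where "QQ = W Q"
  have hkk: "kk = 4 *\<^sub>R k" unfolding k_def by simp
  have Wgh: "gg * hh = 1" "hh * gg = 1" using BF(1,2) unfolding gg_def hh_def h0_def by (metis W_hom)+
  have wA: "W (A t) = -(II*hh)" using BF(3) unfolding A_def II_def hh_def h0_def by (simp add: W_hom)
  have wB: "W (B t) = -(JJ*hh)" using BF(4) unfolding B_def JJ_def hh_def h0_def by (simp add: W_hom)
  have wtI: "tpm II = -(gg*II*hh)" using BF(7) unfolding II_def gg_def hh_def h0_def by (simp add: tpm_W W_hom)
  have wtJ: "tpm JJ = -(gg*JJ*hh)" using BF(8) unfolding JJ_def gg_def hh_def h0_def by (simp add: tpm_W W_hom)
  have wth: "tpm hh = hh" using BF(9) unfolding hh_def h0_def by (simp add: tpm_W)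
  have wtg: "tpm gg = gg" using BF(10) unfolding gg_def by (simp add: tpm_W)
  have wtk: "tpm k = -k" using Kt unfolding k_def kk_def by (simp add: tpm_W tpm_props W_hom)
  have wtx: "tpm xx = -xx" using dbT unfolding xx_def by (simp add: tpm_W W_hom)
  have wtG: "tpm GG = GG" using dgT unfolding GG_def by (simp add: tpm_W)
  have WII: "II*II = -1" "JJ*JJ = -1" using BF(12,13) unfolding II_def JJ_def by (metis W_hom)+
  have q1: "W (blk12 (J1_of (g t) (b t) (I t) (J t))) = (1/2) *\<^sub>R ((II - JJ)*hh)"
    by (simp only: b12_1 W_hom wA wB) (simp add: algebra_simps)
  have q2: "W (blk12 (J2_of (g t) (b t) (I t) (J t))) = (1/2) *\<^sub>R ((II + JJ)*hh)"
    by (simp only: b12_2 W_hom wA wB) (simp add: algebra_simps)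
  have t1: "W (blk11 (J1_of (g t) (b t) (I t) (J t))) = (1/2) *\<^sub>R (II + JJ - (II - JJ)*hh*bb)"
    by (simp only: b11_1 W_hom wA wB) (simp add: algebra_simps II_def JJ_def bb_def)
  have t2: "W (blk11 (J2_of (g t) (b t) (I t) (J t))) = (1/2) *\<^sub>R (II - JJ - (II + JJ)*hh*bb)"
    by (simp only: b11_2 W_hom wA wB) (simp add: algebra_simps II_def JJ_def bb_def)
  have p12_1: "W (blk12 F1) = (II - JJ)*hh*k*((II - JJ)*hh)"
    unfolding F1_def blk_PhiK W_hom q1 by (simp add: hkk flip: kk_def)
  have p12_2: "W (blk12 F2) = (II + JJ)*hh*k*((II + JJ)*hh)"
    unfolding F2_def blk_PhiK W_hom q2 by (simp add: hkk flip: kk_def)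
  have p11_1: "W (blk11 F1) = (II - JJ)*hh*k*(II + JJ - (II - JJ)*hh*bb)"
    unfolding F1_def blk_PhiK W_hom q1 t1 by (simp add: hkk flip: kk_def)
  have p11_2: "W (blk11 F2) = (II + JJ)*hh*k*(II - JJ - (II + JJ)*hh*bb)"
    unfolding F2_def blk_PhiK W_hom q2 t2 by (simp add: hkk flip: kk_def)
  have wAp: "W Ap = -((II - JJ)*hh*k*((II - JJ)*hh) + (II + JJ)*hh*k*((II + JJ)*hh))"
    unfolding Ap_def by (simp only: W_hom p12_1 p12_2)
  have wBp: "W Bp = -((II + JJ)*hh*k*((II + JJ)*hh) - (II - JJ)*hh*k*((II - JJ)*hh))"
    unfolding Bp_def by (simp only: W_hom p12_1 p12_2) simp
  have H1: "(GG*II + gg*PP)*(-(II*hh)) + gg*II*(-((II - JJ)*hh*k*((II - JJ)*hh) + (II + JJ)*hh*k*((II + JJ)*hh))) = 0"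
  proof -
    have "W ((g t ** I t) ** Ap + (g t ** P + G ** I t) ** A t) = 0" using dGA by (simp add: W_hom)
    then show ?thesis unfolding W_hom wA wAp by (simp add: add.commute gg_def II_def PP_def GG_def)
  qed
  have H2: "(GG*JJ + gg*QQ)*(-(JJ*hh)) + gg*JJ*(-((II + JJ)*hh*k*((II + JJ)*hh) - (II - JJ)*hh*k*((II - JJ)*hh))) = 0"
  proof -
    have "W ((g t ** J t) ** Bp + (g t ** Q + G ** J t) ** B t) = 0" using dGB by (simp add: W_hom)
    then show ?thesis unfolding W_hom wB wBp by (simp add: add.commute gg_def JJ_def QQ_def GG_def)
  qed
  have H3: "(II - JJ)*hh*k*(II + JJ - (II - JJ)*hh*bb) + (II + JJ)*hh*k*(II - JJ - (II + JJ)*hh*bb)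
      = PP + (-((II - JJ)*hh*k*((II - JJ)*hh) + (II + JJ)*hh*k*((II + JJ)*hh)))*bb + (-(II*hh))*xx"
  proof -
    have "W (P + (A t ** x + Ap ** b t)) = W (blk11 F1 + blk11 F2)" using dU by simp
    then show ?thesis unfolding W_hom wA wAp p11_1 p11_2
      by (simp add: add_ac PP_def xx_def bb_def)
  qed
  have H4: "(II - JJ)*hh*k*(II + JJ - (II - JJ)*hh*bb) - (II + JJ)*hh*k*(II - JJ - (II + JJ)*hh*bb)
      = QQ - (-((II + JJ)*hh*k*((II + JJ)*hh) - (II - JJ)*hh*k*((II - JJ)*hh)))*bb - (-(JJ*hh))*xx"
  proof -
    have "W (Q - (B t ** x + Bp ** b t)) = W (blk11 F1 - blk11 F2)" using dV by simp
    then show ?thesis unfolding W_hom wB wBp p11_1 p11_2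
      by (simp add: algebra_simps QQ_def xx_def bb_def)
  qed
  have H5: "PP*II + II*PP = 0"
  proof -
    have "W (I t ** P + P ** I t) = 0" using dII by (simp add: W_hom)
    then show ?thesis unfolding W_hom by (simp add: add.commute PP_def II_def)
  qed
  have C: "GG = -2*(k*II + gg*II*hh*k) \<and> xx = -2*(k*II - gg*II*hh*k) \<and> PP = 0
    \<and> QQ = 2*((II*JJ - JJ*II)*hh*k) \<and> GG*JJ + gg*QQ = -2*(k*II*JJ + gg*JJ*II*hh*k)"
    by (rule core[OF Wgh WII tpm_props(1,2,3) wtg wth wtk wtx wtI wtJ wtG H1 H2 H3 H4 H5])
  have n2: "\<And>X. (-2::'n mx) * X = (-2) *\<^sub>R X" "\<And>X. (2::'n mx) * X = 2 *\<^sub>R X"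
    by (simp_all add: scaleR_conv_of_real)
  have c1: "GG = -2*(k*II + gg*II*hh*k)" and c2: "xx = -2*(k*II - gg*II*hh*k)" and c3: "PP = 0"
    and c4: "QQ = 2*((II*JJ - JJ*II)*hh*k)" and c5: "GG*JJ + gg*QQ = -2*(k*II*JJ + gg*JJ*II*hh*k)"
    using C by blast+
  have CG: "GG = (-2) *\<^sub>R (k*II + gg*II*hh*k)" using c1 by (simp only: n2)
  have Cx: "xx = (-2) *\<^sub>R (k*II - gg*II*hh*k)" using c2 by (simp only: n2)
  have CP: "P = 0" using c3 unfolding PP_def by (metis W_hom(7) W_inj)
  have CQ: "QQ = 2 *\<^sub>R ((II*JJ - JJ*II)*hh*k)" using c4 by (simp only: n2)
  have CGJ: "GG*JJ + gg*QQ = (-2) *\<^sub>R (k*II*JJ + gg*JJ*II*hh*k)" using c5 by (simp only: n2)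
  have wtIt: "W (transpose (I t)) = -(gg*II*hh)" using wtI unfolding II_def by (simp add: tpm_W)
  have wtJt: "W (transpose (J t)) = -(gg*JJ*hh)" using wtJ unfolding JJ_def by (simp add: tpm_W)
  have e1: "G = (- (1/2)) *\<^sub>R formbr (K t) (I t)"
    apply (rule W_eqI)
    apply (simp only: formbr_def W_hom wtIt flip: GG_def kk_def II_def)
    apply (simp add: CG hkk algebra_simps)
    done
  have e2: "x = (- (1/2)) *\<^sub>R formac (K t) (I t)"
    apply (rule W_eqI)
    apply (simp only: formac_def W_hom wtIt flip: xx_def kk_def II_def)
    apply (simp add: Cx hkk algebra_simps)
    done
  have e3: "g t ** P + G ** I t = (- (1/2)) *\<^sub>R (formbr (K t) (I t) ** I t)"
    using e1 CP by (simp add: mm_minus_left mm_scale_left)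
  have hg': "\<And>z. hh * (gg * z) = z" using Wgh(2) by (metis mult.assoc mult_1_left)
  have e4: "g t ** Q + G ** J t = (- (1/2)) *\<^sub>R formac (K t) (I t ** J t)"
  proof (rule W_eqI)
    have "W (g t ** Q + G ** J t) = GG*JJ + gg*QQ"
      by (simp add: W_hom add.commute GG_def JJ_def gg_def QQ_def)
    also have "\<dots> = (-2) *\<^sub>R (k*II*JJ + gg*JJ*II*hh*k)" by (rule CGJ)
    also have "\<dots> = W ((- (1/2)) *\<^sub>R formac (K t) (I t ** J t))"
      unfolding formac_def W_hom matrix_transpose_mul wtIt wtJt
      by (simp add: hkk algebra_simps hg' flip: kk_def II_def JJ_def)
    finally show "W (g t ** Q + G ** J t) = W ((- (1/2)) *\<^sub>R formac (K t) (I t ** J t))" .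
  qed
  have e6: "Q = (1/2) *\<^sub>R (endo_comm (I t) (J t) ** matrix_inv (g t) ** K t)"
    apply (rule W_eqI)
    apply (simp only: endo_comm_def W_hom flip: QQ_def kk_def II_def JJ_def h0_def hh_def)
    apply (simp add: CQ hkk algebra_simps)
    done
  show ?thesis
    using dg db dgI dgJ dI dJ e1 e2 e3 e4 e6 CP by simp
qed


end
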